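(* Let $p(y),q(y)\in\mathbb{C}[y]$ be coprime polynomials such that $p/q$ is nonconstant and $\deg q\le\deg p$. Let $x_1,\dots,x_n$ be distinct points of the Riemann sphere with homogeneous coordinates $[\alpha_i:\beta_i]$ ($x_i=\alpha_i/\beta_i$), and suppose that for each $i$ there is a polynomial $\tilde p_i(y)$ with $$\beta_i\,p(y)-\alpha_i\,q(y)=\tilde p_i(y)^2.$$ Then: (1) if $n=1$ and $x_1=0$, then $x=p/q=P^2/q$ for some polynomial $P$; (2) if $n=2$ and $\{x_1,x_2\}=\{0,\infty\}$, then $x=p/q=P^2/Q^2$ for some polynomials $P,Q$; (3) if $n=3$ and $\{x_1,x_2,x_3\}=\{0,\infty,1\}$, then $x=p/q=\left(\frac{P^2+Q^2}{2PQ}\right)^2$ for some polynomials $P,Q$; (4) if $n\ge 4$, no such $p,q$ exist.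
   Context: The condition expresses that the change of variable $x=p(y)/q(y)$ has every preimage of each point $x_i$ of even multiplicity (used to make half-integer eigenvalues of matrix residues at the points $x_i$ integer after the change of variable). *)

theory Defs
  imports "HOL-Computational_Algebra.Polynomial_Factorial"
begin

text \<open>Points of the Riemann sphere are given by homogeneous coordinates
  [a : b] with (a,b) \<noteq> (0,0); the point is a/b (infinity when b = 0).\<close>

definition hom_point :: "complex \<Rightarrow> complex \<Rightarrow> bool" where
  "hom_point a b \<longleftrightarrow> (a, b) \<noteq> (0, 0)"

definition proj_eq :: "complex \<times> complex \<Rightarrow> complex \<times> complex \<Rightarrow> bool" where
  "proj_eq u v \<longleftrightarrow> fst u * snd v = snd u * fst v"

definition pt_zero :: "complex \<times> complex" where "pt_zero = (0, 1)"
definition pt_infty :: "complex \<times> complex" where "pt_infty = (1, 0)"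
definition pt_one :: "complex \<times> complex" where "pt_one = (1, 1)"

definition pts_set_eq :: "nat \<Rightarrow> (nat \<Rightarrow> complex) \<Rightarrow> (nat \<Rightarrow> complex) \<Rightarrow> (complex \<times> complex) set \<Rightarrow> bool" where
  "pts_set_eq n \<alpha> \<beta> S \<longleftrightarrow>
     (\<forall>i<n. \<exists>s\<in>S. proj_eq (\<alpha> i, \<beta> i) s) \<and> (\<forall>s\<in>S. \<exists>i<n. proj_eq (\<alpha> i, \<beta> i) s)"

end

theory Submission imports Defs "HOL-Computational_Algebra.Computational_Algebra" "HOL-Computational_Algebra.Nth_Powers" "HOL-Computational_Algebra.Field_as_Ring" begin


lemma smult_sq:
  fixes X g :: "complex poly"
  assumes "c \<noteq> 0" "smult c X = g ^ 2"
  shows "\<exists>P. X = P ^ 2"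
proof -
  have "(smult (1 / csqrt c) g) ^ 2 = smult (1 / c) (g ^ 2)"
    by (simp add: smult_power power_divide)
  also have "\<dots> = smult (1 / c) (smult c X)" by (simp only: assms(2))
  also have "\<dots> = X" using assms(1) by simp
  finally show ?thesis by metis
qed

lemma coprime_sq:
  fixes a b w :: "complex poly"
  assumes cop: "coprime a b" and eq: "a * b = w ^ 2"
  shows "\<exists>P. a = P ^ 2"
proof (cases "a = 0")
  case True then show ?thesis by (intro exI[of _ 0]) simp
next
  case anz: False
  show ?thesis
  proof (cases "b = 0")
    case True
    then have "is_unit a" using cop by simp
    then obtain c where c: "a = [:c:]" "c \<noteq> 0"
      by (metis is_unit_iff_degree degree_eq_zeroE anz pCons_0_0)
    have "csqrt c * csqrt c = c" by (metis power2_csqrt power2_eq_square)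
    then have "a = [:csqrt c:] ^ 2" using c by (simp add: power2_eq_square)
    then show ?thesis by blast
  next
    case bnz: False
    then have wnz: "w \<noteq> 0" using anz eq by auto
    have "is_nth_power 2 (normalize a)"
    proof (subst is_nth_power_conv_multiplicity, simp, intro allI impI)
      fix r :: "complex poly" assume r: "prime r"
      have "multiplicity r (a * b) = multiplicity r a + multiplicity r b"
        using r anz bnz by (simp add: prime_elem_multiplicity_mult_distrib)
      moreover have "multiplicity r (w ^ 2) = 2 * multiplicity r w"
        using r wnz by (simp add: prime_elem_multiplicity_power_distrib)
      moreover have "\<not> (r dvd a \<and> r dvd b)"
        using cop r by (meson coprime_common_divisor not_prime_unit)
      ultimately show "2 dvd multiplicity r a"
      proof (cases "r dvd a")
        case True
        with \<open>\<not> (r dvd a \<and> r dvd b)\<close> have "multiplicity r b = 0"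
          by (simp add: not_dvd_imp_multiplicity_0)
        with \<open>multiplicity r (a * b) = _\<close> \<open>multiplicity r (w ^ 2) = _\<close> eq
        have "multiplicity r a = 2 * multiplicity r w" by simp
        then show ?thesis by simp
      next
        case False then show ?thesis by (simp add: not_dvd_imp_multiplicity_0)
      qed
    qed
    then obtain y where y: "normalize a = y ^ 2" by (auto elim: is_nth_powerE)
    define c where "c = lead_coeff a"
    have cnz: "c \<noteq> 0" using anz c_def by simp
    have "a = unit_factor a * normalize a" by simp
    also have "unit_factor a = [:c:]" by (simp add: unit_factor_poly_def c_def)
    finally have "smult (1/c) a = y ^ 2" using y cnz by simp
    then show ?thesis using smult_sq[of "1/c" a y] cnz by simp
  qed
qed



lemma wr_dvd:
  fixes g h :: "complex poly"
  shows "g dvd pderiv (g^2) * h - g^2 * pderiv h"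
  by (simp add: power2_eq_square pderiv_mult)

lemma wr_comb:
  fixes p q :: "complex poly"
  shows "pderiv (smult b1 p - smult a1 q) * (smult b2 p - smult a2 q) - (smult b1 p - smult a1 q) * pderiv (smult b2 p - smult a2 q)
     = smult (a1*b2 - a2*b1) (pderiv p * q - p * pderiv q)"
  by (simp add: pderiv_diff pderiv_smult algebra_simps smult_diff_left smult_diff_right)

lemma wr_deg:
  fixes a b :: "complex poly"
  assumes "pderiv a * b - a * pderiv b \<noteq> 0"
  shows "degree (pderiv a * b - a * pderiv b) < degree a + degree b"
proof (cases "degree a = 0")
  case True
  then have "pderiv a = 0" by (simp add: pderiv_eq_0_iff)
  then have W: "pderiv a * b - a * pderiv b = - (a * pderiv b)" by simp
  with assms have "pderiv b \<noteq> 0" "a \<noteq> 0" by auto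
  then have "degree b > 0" by (simp add: pderiv_eq_0_iff)
  have "degree (a * pderiv b) \<le> degree a + degree (pderiv b)" by (rule degree_mult_le)
  with \<open>degree b > 0\<close> show ?thesis unfolding W degree_minus by (simp add: degree_pderiv)
next
  case False
  have "degree (pderiv a * b) \<le> degree (pderiv a) + degree b" by (rule degree_mult_le)
  moreover have "degree (a * pderiv b) \<le> degree a + degree (pderiv b)" by (rule degree_mult_le)
  ultimately have "degree (pderiv a * b) \<le> degree a + degree b - 1"
    using False by (auto simp: degree_pderiv)
  moreover have "degree (a * pderiv b) \<le> degree a + degree b - 1"
  proof (cases "degree b = 0")
    case True then have "pderiv b = 0" by (simp add: pderiv_eq_0_iff)
    then show ?thesis by simp
  next
    case False
    with \<open>degree (a * pderiv b) \<le> degree a + degree (pderiv b)\<close> show ?thesis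
      by (simp add: degree_pderiv)
  qed
  ultimately have "degree (pderiv a * b - a * pderiv b) \<le> degree a + degree b - 1"
    by (rule degree_diff_le)
  with False show ?thesis by simp
qed

lemma coprime_comb:
  fixes p q :: "complex poly"
  assumes cop: "coprime p q" and d: "a1 * b2 \<noteq> b1 * a2"
  shows "coprime (smult b1 p - smult a1 q) (smult b2 p - smult a2 q)"
proof (rule coprimeI)
  fix r assume r1: "r dvd smult b1 p - smult a1 q" and r2: "r dvd smult b2 p - smult a2 q"
  have "smult a2 (smult b1 p - smult a1 q) - smult a1 (smult b2 p - smult a2 q) = smult (a2*b1 - a1*b2) p"
    by (simp add: algebra_simps smult_diff_left smult_diff_right)
  moreover have "smult b2 (smult b1 p - smult a1 q) - smult b1 (smult b2 p - smult a2 q) = smult (a2*b1 - a1*b2) q"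
    by (simp add: algebra_simps smult_diff_left smult_diff_right)
  ultimately have "r dvd smult (a2*b1 - a1*b2) p" "r dvd smult (a2*b1 - a1*b2) q"
    using r1 r2 by (metis dvd_diff dvd_smult)+
  moreover have "a2*b1 - a1*b2 \<noteq> 0" using d by (simp add: algebra_simps)
  ultimately have "r dvd p" "r dvd q" by (auto dest: dvd_smult_cancel)
  then show "is_unit r" by (rule coprime_common_divisor[OF cop])
qed

lemma W_nz:
  fixes p q :: "complex poly"
  assumes cop: "coprime p q" and qnz: "q \<noteq> 0" and nc: "\<forall>c. p \<noteq> smult c q"
  shows "pderiv p * q - p * pderiv q \<noteq> 0"
proof
  assume "pderiv p * q - p * pderiv q = 0"
  then have E: "pderiv p * q = p * pderiv q" by simp
  then have "q dvd p * pderiv q" by (metis dvd_triv_right)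
  moreover have "coprime q p" using cop by (simp add: coprime_commute)
  ultimately have "q dvd pderiv q" by (simp add: coprime_dvd_mult_right_iff)
  have "pderiv q = 0"
  proof (rule ccontr)
    assume "pderiv q \<noteq> 0"
    then have "degree q \<le> degree (pderiv q)" using \<open>q dvd pderiv q\<close> by (rule dvd_imp_degree_le[rotated])
    moreover have "degree q > 0" using \<open>pderiv q \<noteq> 0\<close> by (simp add: pderiv_eq_0_iff)
    ultimately show False by (simp add: degree_pderiv)
  qed
  then have "degree q = 0" by (simp add: pderiv_eq_0_iff)
  then obtain c where c: "q = [:c:]" by (metis degree_eq_zeroE)
  with qnz have "c \<noteq> 0" by simp
  from E \<open>pderiv q = 0\<close> qnz have "pderiv p = 0" by simp
  then have "degree p = 0" by (simp add: pderiv_eq_0_iff)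
  then obtain d where d: "p = [:d:]" by (metis degree_eq_zeroE)
  have "p = smult (d / c) q" using c d \<open>c \<noteq> 0\<close> by simp
  with nc show False by blast
qed

lemma part4:
  fixes p q :: "complex poly" and n :: nat and \<alpha> \<beta> :: "nat \<Rightarrow> complex"
  assumes cop: "coprime p q"
    and qnz: "q \<noteq> 0"
    and nonconst: "\<forall>c. p \<noteq> smult c q"
    and dist: "\<forall>i<n. \<forall>j<n. i \<noteq> j \<longrightarrow> \<not> proj_eq (\<alpha> i, \<beta> i) (\<alpha> j, \<beta> j)"
    and sq: "\<forall>i<n. \<exists>pt :: complex poly. smult (\<beta> i) p - smult (\<alpha> i) q = pt ^ 2"
    and n4: "n \<ge> 4"
  shows False
proof -
  define f where "f i = smult (\<beta> i) p - smult (\<alpha> i) q" for i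
  have "\<forall>i. \<exists>pt. i < n \<longrightarrow> f i = pt ^ 2" using sq by (auto simp: f_def)
  then obtain g where g: "\<And>i. i < n \<Longrightarrow> f i = g i ^ 2" by metis
  define W where "W = pderiv p * q - p * pderiv q"
  have Wnz: "W \<noteq> 0" unfolding W_def by (rule W_nz[OF cop qnz nonconst])
  have K: "g i dvd W \<and> g i \<noteq> 0 \<and> degree W < 2 * degree (g i) + 2 * degree (g j) \<and> coprime (g i) (g j)"
    if ij: "i < n" "j < n" "i \<noteq> j" for i j
  proof -
    define c where "c = \<alpha> i * \<beta> j - \<alpha> j * \<beta> i"
    have d: "\<alpha> i * \<beta> j \<noteq> \<beta> i * \<alpha> j" using dist ij by (auto simp: proj_eq_def)
    then have cnz: "c \<noteq> 0" by (simp add: c_def algebra_simps)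
    have Wf: "pderiv (f i) * f j - f i * pderiv (f j) = smult c W"
      unfolding f_def W_def c_def by (rule wr_comb)
    then have Wfnz: "pderiv (f i) * f j - f i * pderiv (f j) \<noteq> 0" using cnz Wnz by simp
    have "g i dvd pderiv (g i ^ 2) * f j - g i ^ 2 * pderiv (f j)" by (rule wr_dvd)
    then have "g i dvd smult c W" using Wf g[OF ij(1)] by simp
    then have dv: "g i dvd W" using cnz by (rule dvd_smult_cancel)
    have fi: "f i \<noteq> 0" using Wfnz by auto
    have fj: "f j \<noteq> 0" using Wfnz by auto
    have gi: "g i \<noteq> 0" using fi g[OF ij(1)] by auto
    have gj: "g j \<noteq> 0" using fj g[OF ij(2)] by auto
    have "degree (pderiv (f i) * f j - f i * pderiv (f j)) < degree (f i) + degree (f j)"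
      using Wfnz by (rule wr_deg)
    then have "degree W < degree (f i) + degree (f j)" using Wf cnz by simp
    then have dg: "degree W < 2 * degree (g i) + 2 * degree (g j)"
      using g[OF ij(1)] g[OF ij(2)] gi gj by (simp add: degree_power_eq)
    have "coprime (f i) (f j)" unfolding f_def by (rule coprime_comb[OF cop d])
    then have "coprime (g i) (g j)" using g[OF ij(1)] g[OF ij(2)] by simp
    with dv gi dg show ?thesis by blast
  qed
  have i4: "0 < n" "1 < n" "2 < n" "3 < n" using n4 by auto
  note K01 = K[OF i4(1) i4(2)] and K10 = K[OF i4(2) i4(1)] and K02 = K[OF i4(1) i4(3)]
   and K03 = K[OF i4(1) i4(4)] and K12 = K[OF i4(2) i4(3)] and K13 = K[OF i4(2) i4(4)]
   and K23 = K[OF i4(3) i4(4)] and K32 = K[OF i4(4) i4(3)]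
  have a: "g 0 * g 1 dvd W" using K01 K10 by (auto intro: divides_mult)
  have b: "g 2 * g 3 dvd W" using K23 K32 by (auto intro: divides_mult)
  have "coprime (g 0 * g 1) (g 2 * g 3)" using K02 K03 K12 K13 by simp
  then have "(g 0 * g 1) * (g 2 * g 3) dvd W" using a b by (auto intro: divides_mult)
  then have "degree ((g 0 * g 1) * (g 2 * g 3)) \<le> degree W" using Wnz by (rule dvd_imp_degree_le)
  then have "degree (g 0) + degree (g 1) + (degree (g 2) + degree (g 3)) \<le> degree W"
    using K01 K10 K23 K32 by (simp add: degree_mult_eq)
  with K01 K23 show False by linarith
qed


lemma zero_pt:
  fixes p q :: "complex poly"
  assumes "hom_point a b" "proj_eq (a, b) pt_zero" "\<exists>pt :: complex poly. smult b p - smult a q = pt ^ 2"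
  shows "\<exists>A. p = A ^ 2"
proof -
  have "a = 0" using assms(2) by (simp add: proj_eq_def pt_zero_def)
  then have "b \<noteq> 0" using assms(1) by (simp add: hom_point_def)
  from assms(3) obtain g where "smult b p - smult a q = g ^ 2" by blast
  with \<open>a = 0\<close> have "smult b p = g ^ 2" by simp
  with \<open>b \<noteq> 0\<close> show ?thesis by (rule smult_sq)
qed

lemma inf_pt:
  fixes p q :: "complex poly"
  assumes "hom_point a b" "proj_eq (a, b) pt_infty" "\<exists>pt :: complex poly. smult b p - smult a q = pt ^ 2"
  shows "\<exists>B. q = B ^ 2"
proof -
  have "b = 0" using assms(2) by (simp add: proj_eq_def pt_infty_def)
  then have "a \<noteq> 0" using assms(1) by (simp add: hom_point_def)
  from assms(3) obtain g where "smult b p - smult a q = g ^ 2" by blast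
  with \<open>b = 0\<close> have "smult (- a) q = g ^ 2" by simp
  moreover have "- a \<noteq> 0" using \<open>a \<noteq> 0\<close> by simp
  ultimately show ?thesis using smult_sq by blast
qed

lemma one_pt:
  fixes p q :: "complex poly"
  assumes "hom_point a b" "proj_eq (a, b) pt_one" "\<exists>pt :: complex poly. smult b p - smult a q = pt ^ 2"
  shows "\<exists>C. p - q = C ^ 2"
proof -
  have "a = b" using assms(2) by (simp add: proj_eq_def pt_one_def)
  then have "b \<noteq> 0" using assms(1) by (simp add: hom_point_def)
  from assms(3) obtain g where "smult b p - smult a q = g ^ 2" by blast
  with \<open>a = b\<close> have "smult b (p - q) = g ^ 2" by (simp add: smult_diff_right)
  with \<open>b \<noteq> 0\<close> show ?thesis by (rule smult_sq)
qed

lemma two_smult: "smult 2 (x::complex poly) = x + x"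
  by (metis one_add_one smult_add_left smult_1_left)

lemma part3:
  fixes p q u v w :: "complex poly"
  assumes cop: "coprime p q" and qnz: "q \<noteq> 0"
    and pu: "p = u ^ 2" and qv: "q = v ^ 2" and pw: "p - q = w ^ 2"
  shows "\<exists>P Q :: complex poly. P \<noteq> 0 \<and> Q \<noteq> 0 \<and>
                 p * (smult 2 (P * Q)) ^ 2 = (P ^ 2 + Q ^ 2) ^ 2 * q"
proof -
  have quw: "q = (u + w) * (u - w)" using pu pw by (simp add: algebra_simps power2_eq_square)
  have cuw: "coprime u w"
  proof (rule coprimeI)
    fix r assume "r dvd u" "r dvd w"
    then have "r dvd p" "r dvd p - q" using pu pw by (simp_all add: power2_eq_square)
    then have "r dvd p - (p - q)" by (rule dvd_diff)
    then have "r dvd q" by simp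
    with \<open>r dvd p\<close> show "is_unit r" by (rule coprime_common_divisor[OF cop])
  qed
  have c2: "coprime (u + w) (u - w)"
  proof (rule coprimeI)
    fix r assume r1: "r dvd u + w" and r2: "r dvd u - w"
    have s1: "r dvd (u + w) + (u - w)" using r1 r2 by (rule dvd_add)
    have s2: "r dvd (u + w) - (u - w)" using r1 r2 by (rule dvd_diff)
    note s = s1 s2
    have t1: "(u + w) + (u - w) = smult 2 u" by (simp add: two_smult algebra_simps)
    have t2: "(u + w) - (u - w) = smult 2 w" by (simp add: two_smult algebra_simps)
    have "r dvd smult 2 u" using s1 t1 by simp
    then have r3: "r dvd u" by (rule dvd_smult_cancel) simp
    have "r dvd smult 2 w" using s2 t2 by simp
    then have r4: "r dvd w" by (rule dvd_smult_cancel) simp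
    from r3 r4 show "is_unit r" by (rule coprime_common_divisor[OF cuw])
  qed
  have "(u + w) * (u - w) = v ^ 2" using quw qv by simp
  then obtain P where P: "u + w = P ^ 2" using coprime_sq[OF c2] by blast
  have c2': "coprime (u - w) (u + w)" using c2 by (simp add: coprime_commute)
  have "(u - w) * (u + w) = v ^ 2" using quw qv by (simp add: mult.commute)
  then obtain Q where Q: "u - w = Q ^ 2" using coprime_sq[OF c2'] by blast
  have Pnz: "P \<noteq> 0" using P quw qnz by auto
  have Qnz: "Q \<noteq> 0" using Q quw qnz by auto
  have e1: "P ^ 2 + Q ^ 2 = smult 2 u"
    using P Q by (simp add: two_smult algebra_simps)
  have e2: "(smult 2 (P * Q)) ^ 2 = smult 4 (P ^ 2 * Q ^ 2)"
    by (simp add: smult_power power_mult_distrib)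
  have "p * (smult 2 (P * Q)) ^ 2 = smult 4 (u ^ 2 * q)"
    unfolding e2 pu quw P Q by (simp add: algebra_simps)
  also have "\<dots> = (P ^ 2 + Q ^ 2) ^ 2 * q"
    unfolding e1 by (simp add: smult_power)
  finally show ?thesis using Pnz Qnz by blast
qed

theorem mainTheorem5:
  fixes p q :: "complex poly" and n :: nat and \<alpha> \<beta> :: "nat \<Rightarrow> complex"
  assumes cop: "coprime p q"
    and qnz: "q \<noteq> 0"
    and nonconst: "\<forall>c. p \<noteq> smult c q"
    and deg: "degree q \<le> degree p"
    and pts: "\<forall>i<n. hom_point (\<alpha> i) (\<beta> i)"
    and dist: "\<forall>i<n. \<forall>j<n. i \<noteq> j \<longrightarrow> \<not> proj_eq (\<alpha> i, \<beta> i) (\<alpha> j, \<beta> j)"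
    and sq: "\<forall>i<n. \<exists>pt :: complex poly. smult (\<beta> i) p - smult (\<alpha> i) q = pt ^ 2"
  shows "(n = 1 \<and> proj_eq (\<alpha> 0, \<beta> 0) pt_zero \<longrightarrow> (\<exists>P :: complex poly. p = P ^ 2))
       \<and> (n = 2 \<and> pts_set_eq n \<alpha> \<beta> {pt_zero, pt_infty} \<longrightarrow>
            (\<exists>P Q :: complex poly. Q \<noteq> 0 \<and> p * Q ^ 2 = P ^ 2 * q))
       \<and> (n = 3 \<and> pts_set_eq n \<alpha> \<beta> {pt_zero, pt_infty, pt_one} \<longrightarrow>
            (\<exists>P Q :: complex poly. P \<noteq> 0 \<and> Q \<noteq> 0 \<and>
                 p * (smult 2 (P * Q)) ^ 2 = (P ^ 2 + Q ^ 2) ^ 2 * q))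
       \<and> \<not> (n \<ge> 4)"
proof (intro conjI impI)
  assume "n = 1 \<and> proj_eq (\<alpha> 0, \<beta> 0) pt_zero"
  then show "\<exists>P :: complex poly. p = P ^ 2"
    using zero_pt[of "\<alpha> 0" "\<beta> 0" p q] pts sq by auto
next
  assume H: "n = 2 \<and> pts_set_eq n \<alpha> \<beta> {pt_zero, pt_infty}"
  then obtain i j where "i < n" "proj_eq (\<alpha> i, \<beta> i) pt_zero" "j < n" "proj_eq (\<alpha> j, \<beta> j) pt_infty"
    unfolding pts_set_eq_def by blast
  then obtain A B where A: "p = A ^ 2" and B: "q = B ^ 2"
    using zero_pt[of "\<alpha> i" "\<beta> i" p q] inf_pt[of "\<alpha> j" "\<beta> j" p q] pts sq by blast
  have "B \<noteq> 0" using B qnz by auto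
  moreover have "p * B ^ 2 = A ^ 2 * q" using A B by (simp add: mult.commute)
  ultimately show "\<exists>P Q :: complex poly. Q \<noteq> 0 \<and> p * Q ^ 2 = P ^ 2 * q" by blast
next
  assume H: "n = 3 \<and> pts_set_eq n \<alpha> \<beta> {pt_zero, pt_infty, pt_one}"
  then obtain i j k where "i < n" "proj_eq (\<alpha> i, \<beta> i) pt_zero" "j < n" "proj_eq (\<alpha> j, \<beta> j) pt_infty"
     "k < n" "proj_eq (\<alpha> k, \<beta> k) pt_one"
    unfolding pts_set_eq_def by blast
  then obtain u v w where "p = u ^ 2" "q = v ^ 2" "p - q = w ^ 2"
    using zero_pt[of "\<alpha> i" "\<beta> i" p q] inf_pt[of "\<alpha> j" "\<beta> j" p q] one_pt[of "\<alpha> k" "\<beta> k" p q] pts sq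
    by blast
  then show "\<exists>P Q :: complex poly. P \<noteq> 0 \<and> Q \<noteq> 0 \<and>
                 p * (smult 2 (P * Q)) ^ 2 = (P ^ 2 + Q ^ 2) ^ 2 * q"
    using part3[OF cop qnz] by blast
next
  show "\<not> (n \<ge> 4)" using part4[OF cop qnz nonconst dist sq] by blast
qed

end
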